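(* If $\pi\colon\Gamma\to\Lambda$ is an epimorphism of groups, then $r(\Gamma)\ge r(\Lambda)$.
   Context: For finite symmetric $S\subseteq\Gamma$, $\rho(\Gamma,S)$ is the operator norm on $\ell^2(\Gamma)$ of the Markov operator $M_S=\frac1{|S|}\mathbf{1}_S$ acting by left convolution. $r(\Gamma)=-\liminf_S\frac{\ln\rho(\Gamma,S)}{\ln|S|}$, the liminf over the directed set of finite symmetric subsets ordered by inclusion ($\liminf_Sf(S)=\sup_S\inf_{S'\supseteq S}f(S')$). *)

theory Defs
  imports "HOL-Algebra.Group" "HOL-Analysis.Analysis"
begin

text \<open>l2-norm of a complex function on a set A (meaningful for square-summable f).\<close>
definition l2norm :: "'a set \<Rightarrow> ('a \<Rightarrow> complex) \<Rightarrow> real" where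
  "l2norm A f = sqrt (infsum (\<lambda>x. (cmod (f x))^2) A)"

definition l2space :: "'a set \<Rightarrow> ('a \<Rightarrow> complex) set" where
  "l2space A = {f. (\<lambda>x. (cmod (f x))^2) summable_on A}"

text \<open>Markov operator M_S = (1/|S|) 1_S acting by left convolution:
  (M_S f)(x) = (1/|S|) * sum over s in S of f(s^-1 x).\<close>
definition markov_op :: "('a, 'b) monoid_scheme \<Rightarrow> 'a set \<Rightarrow> ('a \<Rightarrow> complex) \<Rightarrow> ('a \<Rightarrow> complex)" where
  "markov_op G S f = (\<lambda>x. complex_of_real (1 / real (card S)) *
      (\<Sum>s\<in>S. f (inv\<^bsub>G\<^esub> s \<otimes>\<^bsub>G\<^esub> x)))"

definition rho :: "('a, 'b) monoid_scheme \<Rightarrow> 'a set \<Rightarrow> real" where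
  "rho G S = Sup {l2norm (carrier G) (markov_op G S f) | f.
                   f \<in> l2space (carrier G) \<and> l2norm (carrier G) f \<le> 1}"

definition fin_sym :: "('a, 'b) monoid_scheme \<Rightarrow> 'a set set" where
  "fin_sym G = {S. S \<subseteq> carrier G \<and> finite S \<and> (\<forall>s\<in>S. inv\<^bsub>G\<^esub> s \<in> S)}"

text \<open>r(G) = - liminf_S ln rho(G,S) / ln |S| over the directed set of finite symmetric
  subsets ordered by inclusion, with liminf_S f(S) = sup_S inf_{S' \<supseteq> S} f(S')
  (computed in the extended reals).\<close>
definition r_exp :: "('a, 'b) monoid_scheme \<Rightarrow> ereal" where
  "r_exp G = - (SUP S\<in>fin_sym G. INF S'\<in>{S'\<in>fin_sym G. S \<subseteq> S'}.
                   ereal (ln (rho G S') / ln (real (card S'))))"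

end

theory Submission
  imports Defs
begin

lemma L2_set_sum_le:
  assumes "finite S"
  shows "L2_set (\<lambda>x. \<Sum>s\<in>S. h s x) X \<le> (\<Sum>s\<in>S. L2_set (h s) X)"
  using assms
proof (induction S rule: finite_induct)
  case empty
  then show ?case by (simp add: L2_set_def)
next
  case (insert a S)
  have "L2_set (\<lambda>x. \<Sum>s\<in>insert a S. h s x) X = L2_set (\<lambda>x. h a x + (\<Sum>s\<in>S. h s x)) X"
    using insert by simp
  also have "\<dots> \<le> L2_set (h a) X + L2_set (\<lambda>x. \<Sum>s\<in>S. h s x) X"
    by (rule L2_set_triangle_ineq)
  also have "\<dots> \<le> L2_set (h a) X + (\<Sum>s\<in>S. L2_set (h s) X)"
    using insert by simp
  finally show ?case using insert by simp
qed

lemma bridge: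
  fixes g :: "'a \<Rightarrow> real"
  assumes "\<And>x. x \<in> A \<Longrightarrow> g x \<ge> 0"
    and "\<And>X. finite X \<Longrightarrow> X \<subseteq> A \<Longrightarrow> sum g X \<le> C"
  shows "g summable_on A" "infsum g A \<le> C"
proof -
  show s: "g summable_on A"
    by (rule nonneg_bdd_above_summable_on) (use assms in \<open>auto simp: bdd_above_def\<close>)
  show "infsum g A \<le> C"
    by (rule infsum_le_finite_sums[OF s]) (use assms in auto)
qed

lemma infsum_UN_fin:
  fixes g :: "'a \<Rightarrow> real"
  assumes "finite Y" "g summable_on A" "\<And>y. y \<in> Y \<Longrightarrow> B y \<subseteq> A"
    and "\<And>y z. y \<in> Y \<Longrightarrow> z \<in> Y \<Longrightarrow> y \<noteq> z \<Longrightarrow> B y \<inter> B z = {}"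
  shows "infsum g (\<Union>y\<in>Y. B y) = (\<Sum>y\<in>Y. infsum g (B y))"
  using assms
proof (induction Y rule: finite_induct)
  case empty
  then show ?case by simp
next
  case (insert a Y)
  have "infsum g (\<Union>y\<in>insert a Y. B y) = infsum g (B a \<union> (\<Union>y\<in>Y. B y))" by simp
  also have "\<dots> = infsum g (B a) + infsum g (\<Union>y\<in>Y. B y)"
  proof (rule infsum_Un_disjoint)
    show "g summable_on B a" using insert.prems by (auto intro: summable_on_subset_banach)
    show "g summable_on (\<Union>y\<in>Y. B y)" using insert.prems by (auto intro: summable_on_subset_banach)
    show "B a \<inter> (\<Union>y\<in>Y. B y) = {}"
    proof (rule ccontr)
      assume "B a \<inter> (\<Union>y\<in>Y. B y) \<noteq> {}"
      then obtain y where "y \<in> Y" "B a \<inter> B y \<noteq> {}" by blast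
      moreover have "y \<noteq> a" using \<open>y \<in> Y\<close> insert.hyps by blast
      ultimately show False using insert.prems(3)[of a y] \<open>y \<in> Y\<close> by blast
    qed
  qed
  also have "\<dots> = infsum g (B a) + (\<Sum>y\<in>Y. infsum g (B y))"
    using insert by auto
  finally show ?case using insert by simp
qed

lemma l2_sq_summable_sub:
  assumes "f \<in> l2space A" "B \<subseteq> A"
  shows "f \<in> l2space B"
  using assms unfolding l2space_def by (auto intro: summable_on_subset_banach)

lemma l2norm_nonneg: "l2norm A f \<ge> 0"
  unfolding l2norm_def by (simp add: infsum_nonneg)

lemma l2norm_sq: "(l2norm A f)^2 = infsum (\<lambda>x. (cmod (f x))^2) A"
  unfolding l2norm_def by (simp add: infsum_nonneg)

lemma finite_sum_le_l2:
  assumes "f \<in> l2space A" "finite X" "X \<subseteq> A"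
  shows "L2_set (\<lambda>x. cmod (f x)) X \<le> l2norm A f"
proof -
  have "(\<Sum>x\<in>X. (cmod (f x))^2) \<le> infsum (\<lambda>x. (cmod (f x))^2) A"
    by (rule finite_sum_le_infsum) (use assms in \<open>auto simp: l2space_def\<close>)
  then show ?thesis unfolding L2_set_def l2norm_def by (rule real_sqrt_le_mono)
qed

lemma translate_bound:
  assumes "group G" "s \<in> carrier G" "f \<in> l2space A" "finite X" "X \<subseteq> carrier G"
    and "(\<lambda>x. inv\<^bsub>G\<^esub> s \<otimes>\<^bsub>G\<^esub> x) ` X \<subseteq> A"
  shows "L2_set (\<lambda>x. cmod (f (inv\<^bsub>G\<^esub> s \<otimes>\<^bsub>G\<^esub> x))) X \<le> l2norm A f"
proof -
  interpret group G by fact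
  have inj: "inj_on (\<lambda>x. inv\<^bsub>G\<^esub> s \<otimes>\<^bsub>G\<^esub> x) X"
    unfolding inj_on_def using assms(2,5) by (metis inv_closed Units_eq Units_l_cancel subsetD)
  have "L2_set (\<lambda>x. cmod (f (inv\<^bsub>G\<^esub> s \<otimes>\<^bsub>G\<^esub> x))) X = L2_set (\<lambda>y. cmod (f y)) ((\<lambda>x. inv\<^bsub>G\<^esub> s \<otimes>\<^bsub>G\<^esub> x) ` X)"
    unfolding L2_set_def using sum.reindex[OF inj, of "\<lambda>y. (cmod (f y))^2"] by (simp add: o_def)
  also have "\<dots> \<le> l2norm A f"
    by (rule finite_sum_le_l2) (use assms in auto)
  finally show ?thesis .
qed

lemma markov_pointwise:
  "cmod (markov_op G S f x) \<le> (1 / real (card S)) * (\<Sum>s\<in>S. cmod (f (inv\<^bsub>G\<^esub> s \<otimes>\<^bsub>G\<^esub> x)))"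
proof -
  have "cmod (markov_op G S f x) = (1 / real (card S)) * cmod (\<Sum>s\<in>S. f (inv\<^bsub>G\<^esub> s \<otimes>\<^bsub>G\<^esub> x))"
    unfolding markov_op_def by (simp add: norm_mult norm_divide)
  also have "\<dots> \<le> (1 / real (card S)) * (\<Sum>s\<in>S. cmod (f (inv\<^bsub>G\<^esub> s \<otimes>\<^bsub>G\<^esub> x)))"
    by (rule mult_left_mono) (auto intro: norm_sum)
  finally show ?thesis .
qed

lemma markov_L2_bound:
  assumes "group G" "S \<subseteq> carrier G" "finite S" "f \<in> l2space (carrier G)"
    "finite X" "X \<subseteq> carrier G"
  shows "L2_set (\<lambda>x. cmod (markov_op G S f x)) X \<le> l2norm (carrier G) f"
proof -
  let ?c = "1 / real (card S)"
  have "L2_set (\<lambda>x. cmod (markov_op G S f x)) X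
      \<le> L2_set (\<lambda>x. ?c * (\<Sum>s\<in>S. cmod (f (inv\<^bsub>G\<^esub> s \<otimes>\<^bsub>G\<^esub> x)))) X"
    by (rule L2_set_mono) (use markov_pointwise[of G S f] in auto)
  also have "\<dots> = ?c * L2_set (\<lambda>x. \<Sum>s\<in>S. cmod (f (inv\<^bsub>G\<^esub> s \<otimes>\<^bsub>G\<^esub> x))) X"
    by (rule L2_set_right_distrib[symmetric]) simp
  also have "\<dots> \<le> ?c * (\<Sum>s\<in>S. L2_set (\<lambda>x. cmod (f (inv\<^bsub>G\<^esub> s \<otimes>\<^bsub>G\<^esub> x))) X)"
    by (rule mult_left_mono) (use L2_set_sum_le[OF assms(3)] in auto)
  also have "\<dots> \<le> ?c * (\<Sum>s\<in>S. l2norm (carrier G) f)"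
  proof (rule mult_left_mono[OF sum_mono])
    fix s assume "s \<in> S"
    then show "L2_set (\<lambda>x. cmod (f (inv\<^bsub>G\<^esub> s \<otimes>\<^bsub>G\<^esub> x))) X \<le> l2norm (carrier G) f"
      using assms \<open>s \<in> S\<close> by (intro translate_bound) (auto intro!: monoid.m_closed group.is_monoid group.inv_closed)
  qed simp
  also have "\<dots> \<le> l2norm (carrier G) f"
    using l2norm_nonneg[of "carrier G" f] by (cases "card S = 0") auto
  finally show ?thesis .
qed

lemma markov_l2:
  assumes "group G" "S \<subseteq> carrier G" "finite S" "f \<in> l2space (carrier G)"
  shows "markov_op G S f \<in> l2space (carrier G)"
    "l2norm (carrier G) (markov_op G S f) \<le> l2norm (carrier G) f"
proof -
  have b: "sum (\<lambda>x. (cmod (markov_op G S f x))^2) X \<le> (l2norm (carrier G) f)^2"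
    if "finite X" "X \<subseteq> carrier G" for X
  proof -
    have "sum (\<lambda>x. (cmod (markov_op G S f x))^2) X = (L2_set (\<lambda>x. cmod (markov_op G S f x)) X)^2"
      unfolding L2_set_def by (simp add: sum_nonneg)
    also have "\<dots> \<le> (l2norm (carrier G) f)^2"
      by (rule power_mono[OF markov_L2_bound]) (use assms that in auto)
    finally show ?thesis .
  qed
  have s: "(\<lambda>x. (cmod (markov_op G S f x))^2) summable_on carrier G"
    and i: "infsum (\<lambda>x. (cmod (markov_op G S f x))^2) (carrier G) \<le> (l2norm (carrier G) f)^2"
    using bridge[of "carrier G" "\<lambda>x. (cmod (markov_op G S f x))^2", OF _ b] by auto
  show "markov_op G S f \<in> l2space (carrier G)" using s by (simp add: l2space_def)
  have "l2norm (carrier G) (markov_op G S f) \<le> sqrt ((l2norm (carrier G) f)^2)"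
    unfolding l2norm_def[of _ "markov_op G S f"] by (rule real_sqrt_le_mono[OF i])
  then show "l2norm (carrier G) (markov_op G S f) \<le> l2norm (carrier G) f"
    using l2norm_nonneg[of "carrier G" f] by simp
qed

definition rset :: "('a, 'b) monoid_scheme \<Rightarrow> 'a set \<Rightarrow> real set" where
  "rset G S = {l2norm (carrier G) (markov_op G S f) | f.
                   f \<in> l2space (carrier G) \<and> l2norm (carrier G) f \<le> 1}"

lemma rho_rset: "rho G S = Sup (rset G S)"
  unfolding rho_def rset_def by simp

lemma zero_l2: "(\<lambda>_. 0) \<in> l2space A" "l2norm A (\<lambda>_. 0) = 0"
  unfolding l2space_def l2norm_def by auto

lemma rset_ne: "rset G S \<noteq> {}"
proof -
  have "l2norm (carrier G) (markov_op G S (\<lambda>_. 0)) \<in> rset G S"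
    unfolding rset_def using zero_l2[of "carrier G"] by auto
  then show ?thesis by blast
qed

lemma rset_bdd:
  assumes "group G" "S \<subseteq> carrier G" "finite S"
  shows "bdd_above (rset G S)"
  unfolding rset_def bdd_above_def
  using markov_l2(2)[OF assms] by (intro exI[of _ 1]) force

lemma rho_upper:
  assumes "group G" "S \<subseteq> carrier G" "finite S" "f \<in> l2space (carrier G)" "l2norm (carrier G) f \<le> 1"
  shows "l2norm (carrier G) (markov_op G S f) \<le> rho G S"
  unfolding rho_rset
  by (rule cSup_upper[OF _ rset_bdd[OF assms(1-3)]]) (use assms in \<open>auto simp: rset_def\<close>)

lemma rho_leI:
  assumes "\<And>f. f \<in> l2space (carrier G) \<Longrightarrow> l2norm (carrier G) f \<le> 1 \<Longrightarrow>
             l2norm (carrier G) (markov_op G S f) \<le> c"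
  shows "rho G S \<le> c"
  unfolding rho_rset
  by (rule cSup_least[OF rset_ne]) (use assms in \<open>auto simp: rset_def\<close>)

lemma rho_le1:
  assumes "group G" "S \<subseteq> carrier G" "finite S"
  shows "rho G S \<le> 1"
  by (rule rho_leI) (use markov_l2(2)[OF assms] in force)

lemma rho_nonneg:
  assumes "group G" "S \<subseteq> carrier G" "finite S"
  shows "rho G S \<ge> 0"
  using rho_upper[OF assms zero_l2(1)] zero_l2(2) l2norm_nonneg by (metis order_trans zero_le_one)

lemma fin_support:
  fixes g :: "'a \<Rightarrow> real"
  assumes "finite F" "F \<subseteq> A" "\<And>x. x \<in> A - F \<Longrightarrow> g x = 0"
  shows "g summable_on A" "infsum g A = sum g F"
proof -
  have "(g has_sum sum g F) F" using assms(1) by (rule has_sum_finite)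
  moreover have "(g has_sum sum g F) A \<longleftrightarrow> (g has_sum sum g F) F"
    by (rule has_sum_cong_neutral) (use assms in auto)
  ultimately have h: "(g has_sum sum g F) A" by simp
  then show "g summable_on A" by (auto simp: summable_on_def)
  show "infsum g A = sum g F" using h by (rule infsumI)
qed

lemma rho_lower:
  assumes "group G" "S \<subseteq> carrier G" "finite S" "S \<noteq> {}"
  shows "rho G S \<ge> 1 / sqrt (real (card S))"
proof -
  interpret group G by fact
  define d :: "'a \<Rightarrow> complex" where "d = (\<lambda>x. if x = \<one>\<^bsub>G\<^esub> then 1 else 0)"
  have dz: "(\<lambda>x. (cmod (d x))^2) summable_on carrier G"
       "infsum (\<lambda>x. (cmod (d x))^2) (carrier G) = sum (\<lambda>x. (cmod (d x))^2) {\<one>\<^bsub>G\<^esub>}"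
    by (rule fin_support[of "{\<one>\<^bsub>G\<^esub>}"]; auto simp: d_def)+
  have dl2: "d \<in> l2space (carrier G)" using dz by (simp add: l2space_def)
  have dn: "l2norm (carrier G) d = 1" using dz by (simp add: l2norm_def d_def)
  have cS: "real (card S) > 0" using assms by (simp add: card_gt_0_iff)
  have M: "(cmod (markov_op G S d x))^2 = (if x \<in> S then 1 / (real (card S))^2 else 0)"
    if "x \<in> carrier G" for x
  proof -
    have e: "(inv\<^bsub>G\<^esub> s \<otimes>\<^bsub>G\<^esub> x = \<one>\<^bsub>G\<^esub>) = (x = s)" if "s \<in> S" for s
      using that \<open>x \<in> carrier G\<close> assms(2)
      by (metis inv_closed inv_inv l_inv subsetD inv_equality)
    have "(\<Sum>s\<in>S. d (inv\<^bsub>G\<^esub> s \<otimes>\<^bsub>G\<^esub> x)) = (\<Sum>s\<in>S. if x = s then 1 else 0)"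
      by (rule sum.cong) (auto simp: d_def e)
    also have "\<dots> = (if x \<in> S then 1 else 0)" using assms(3) by simp
    finally show ?thesis unfolding markov_op_def
      by (simp add: norm_mult norm_divide power_divide)
  qed
  have Mz: "(\<lambda>x. (cmod (markov_op G S d x))^2) summable_on carrier G"
       "infsum (\<lambda>x. (cmod (markov_op G S d x))^2) (carrier G) = sum (\<lambda>x. (cmod (markov_op G S d x))^2) S"
    by (rule fin_support[of S]; use assms M in auto)+
  have "sum (\<lambda>x. (cmod (markov_op G S d x))^2) S = sum (\<lambda>x. 1 / (real (card S))^2) S"
    by (rule sum.cong) (use M assms in auto)
  also have "\<dots> = 1 / real (card S)" using cS by (simp add: power2_eq_square)
  finally have "l2norm (carrier G) (markov_op G S d) = sqrt (1 / real (card S))"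
    using Mz by (simp add: l2norm_def)
  then have "l2norm (carrier G) (markov_op G S d) = 1 / sqrt (real (card S))"
    by (simp add: real_sqrt_divide)
  moreover have "l2norm (carrier G) (markov_op G S d) \<le> rho G S"
    by (rule rho_upper) (use assms dl2 dn in auto)
  ultimately show ?thesis by simp
qed

lemma rho_full:
  assumes "group H" "finite (carrier H)"
  shows "rho H (carrier H) = 1"
proof -
  interpret group H by fact
  define n where "n = card (carrier H)"
  have n0: "real n > 0" using assms(2) n_def by (auto simp: card_gt_0_iff)
  define c :: complex where "c = complex_of_real (1 / sqrt (real n))"
  define f :: "'a \<Rightarrow> complex" where "f = (\<lambda>_. c)"
  have cc: "(cmod c)^2 = 1 / real n" using n0 by (simp add: c_def norm_divide power_divide)
  have fl2: "f \<in> l2space (carrier H)" using assms(2) by (simp add: l2space_def)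
  have fn: "l2norm (carrier H) f = 1"
    using assms(2) n0 by (simp add: l2norm_def f_def cc n_def[symmetric])
  have Mf: "markov_op H (carrier H) f = f"
    using n0 by (auto simp: markov_op_def f_def n_def[symmetric] fun_eq_iff)
  have "1 \<le> rho H (carrier H)"
    using rho_upper[OF assms(1) subset_refl assms(2) fl2] fn Mf by simp
  moreover have "rho H (carrier H) \<le> 1"
    by (rule rho_le1) (use assms in auto)
  ultimately show ?thesis by simp
qed

lemma markov_L2_split:
  assumes "finite S"
  shows "L2_set (\<lambda>x. cmod (markov_op G S f x)) X \<le>
     (1 / real (card S)) * (\<Sum>s\<in>S. L2_set (\<lambda>x. cmod (f (inv\<^bsub>G\<^esub> s \<otimes>\<^bsub>G\<^esub> x))) X)"
proof -
  let ?c = "1 / real (card S)"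
  have "L2_set (\<lambda>x. cmod (markov_op G S f x)) X
      \<le> L2_set (\<lambda>x. ?c * (\<Sum>s\<in>S. cmod (f (inv\<^bsub>G\<^esub> s \<otimes>\<^bsub>G\<^esub> x)))) X"
    by (rule L2_set_mono) (use markov_pointwise[of G S f] in auto)
  also have "\<dots> = ?c * L2_set (\<lambda>x. \<Sum>s\<in>S. cmod (f (inv\<^bsub>G\<^esub> s \<otimes>\<^bsub>G\<^esub> x))) X"
    by (rule L2_set_right_distrib[symmetric]) simp
  also have "\<dots> \<le> ?c * (\<Sum>s\<in>S. L2_set (\<lambda>x. cmod (f (inv\<^bsub>G\<^esub> s \<otimes>\<^bsub>G\<^esub> x))) X)"
    by (rule mult_left_mono) (use L2_set_sum_le[OF assms] in auto)
  finally show ?thesis .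
qed

lemma kesten:
  assumes G: "group G" and H: "group H" and hom: "\<pi> \<in> hom G H"
    and S: "S \<subseteq> carrier G" "finite S" "S \<noteq> {}"
    and K: "\<And>t. t \<in> \<pi> ` S \<Longrightarrow> card {s\<in>S. \<pi> s = t} \<le> K"
  shows "rho G S \<le> real K * rho H (\<pi> ` S)"
proof -
  interpret gh: group_hom G H \<pi> using G H hom by (simp add: group_hom_def group_hom_axioms_def)
  define T where "T = \<pi> ` S"
  have T: "T \<subseteq> carrier H" "finite T" "T \<noteq> {}" "card T \<le> card S"
    using S hom by (auto simp: T_def hom_in_carrier card_image_le)
  have cT: "real (card T) > 0" using T by (simp add: card_gt_0_iff)
  have rhoT: "rho H T \<ge> 0" by (rule rho_nonneg) (use H T in auto)
  show ?thesis unfolding T_def[symmetric]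
  proof (rule rho_leI)
    fix f assume fl2: "f \<in> l2space (carrier G)" and fn: "l2norm (carrier G) f \<le> 1"
    define fib where "fib = (\<lambda>l. {x\<in>carrier G. \<pi> x = l})"
    define F where "F = (\<lambda>l. l2norm (fib l) f)"
    define Fc where "Fc = (\<lambda>l. complex_of_real (F l))"
    define sqf where "sqf = (\<lambda>x. (cmod (f x))^2)"
    have fsum: "sqf summable_on carrier G" using fl2 by (simp add: l2space_def sqf_def)
    have Fnn: "F l \<ge> 0" for l by (simp add: F_def l2norm_nonneg)
    have FcF: "(cmod (Fc l))^2 = infsum sqf (fib l)" for l
      using Fnn[of l] by (simp add: Fc_def F_def l2norm_sq sqf_def)
    have Yb: "sum (\<lambda>l. (cmod (Fc l))^2) Y \<le> (l2norm (carrier G) f)^2"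
      if "finite Y" "Y \<subseteq> carrier H" for Y
    proof -
      have "sum (\<lambda>l. (cmod (Fc l))^2) Y = (\<Sum>l\<in>Y. infsum sqf (fib l))" by (simp add: FcF)
      also have "\<dots> = infsum sqf (\<Union>l\<in>Y. fib l)"
        by (rule infsum_UN_fin[symmetric, OF that(1) fsum]) (auto simp: fib_def)
      also have "\<dots> \<le> infsum sqf (carrier G)"
        by (rule infsum_mono2[OF summable_on_subset_banach[OF fsum] fsum]) 
           (auto simp: fib_def sqf_def)
      also have "\<dots> = (l2norm (carrier G) f)^2" by (simp add: l2norm_sq sqf_def)
      finally show ?thesis .
    qed
    have Fsum: "(\<lambda>l. (cmod (Fc l))^2) summable_on carrier H"
      and Finf: "infsum (\<lambda>l. (cmod (Fc l))^2) (carrier H) \<le> (l2norm (carrier G) f)^2"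
      using bridge[of "carrier H" "\<lambda>l. (cmod (Fc l))^2", OF _ Yb] by auto
    have Fcl2: "Fc \<in> l2space (carrier H)" using Fsum by (simp add: l2space_def)
    have "l2norm (carrier H) Fc \<le> sqrt ((l2norm (carrier G) f)^2)"
      unfolding l2norm_def[of _ Fc] by (rule real_sqrt_le_mono[OF Finf])
    then have Fcn: "l2norm (carrier H) Fc \<le> 1" using fn l2norm_nonneg[of "carrier G" f] by simp
    have MTb: "l2norm (carrier H) (markov_op H T Fc) \<le> rho H T"
      by (rule rho_upper) (use H T Fcl2 Fcn in auto)
    have MTl2: "markov_op H T Fc \<in> l2space (carrier H)"
      by (rule markov_l2(1)) (use H T Fcl2 in auto)
    define MTF where "MTF = (\<lambda>l. (1 / real (card T)) * (\<Sum>t\<in>T. F (inv\<^bsub>H\<^esub> t \<otimes>\<^bsub>H\<^esub> l)))"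
    have MTF: "cmod (markov_op H T Fc l) = MTF l" for l
    proof -
      have "markov_op H T Fc l = complex_of_real (MTF l)"
        by (simp add: markov_op_def MTF_def Fc_def)
      moreover have "MTF l \<ge> 0" by (simp add: MTF_def Fnn sum_nonneg)
      ultimately show ?thesis by simp
    qed
    have fiber: "L2_set (\<lambda>x. cmod (markov_op G S f x)) {x\<in>X. \<pi> x = l} \<le> real K * MTF l"
      if X: "finite X" "X \<subseteq> carrier G" for X l
    proof -
      let ?Xl = "{x\<in>X. \<pi> x = l}"
      have "L2_set (\<lambda>x. cmod (markov_op G S f x)) ?Xl \<le>
          (1 / real (card S)) * (\<Sum>s\<in>S. L2_set (\<lambda>x. cmod (f (inv\<^bsub>G\<^esub> s \<otimes>\<^bsub>G\<^esub> x))) ?Xl)"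
        by (rule markov_L2_split[OF S(2)])
      also have "\<dots> \<le> (1 / real (card S)) * (\<Sum>s\<in>S. F (inv\<^bsub>H\<^esub> (\<pi> s) \<otimes>\<^bsub>H\<^esub> l))"
      proof (rule mult_left_mono[OF sum_mono])
        fix s assume s: "s \<in> S"
        then have sG: "s \<in> carrier G" using S by auto
        show "L2_set (\<lambda>x. cmod (f (inv\<^bsub>G\<^esub> s \<otimes>\<^bsub>G\<^esub> x))) ?Xl \<le> F (inv\<^bsub>H\<^esub> (\<pi> s) \<otimes>\<^bsub>H\<^esub> l)"
          unfolding F_def
        proof (rule translate_bound[OF G sG])
          show "f \<in> l2space (fib (inv\<^bsub>H\<^esub> (\<pi> s) \<otimes>\<^bsub>H\<^esub> l))"
            by (rule l2_sq_summable_sub[OF fl2]) (auto simp: fib_def)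
          show "finite ?Xl" using X by simp
          show "?Xl \<subseteq> carrier G" using X by auto
          show "(\<lambda>x. inv\<^bsub>G\<^esub> s \<otimes>\<^bsub>G\<^esub> x) ` ?Xl \<subseteq> fib (inv\<^bsub>H\<^esub> (\<pi> s) \<otimes>\<^bsub>H\<^esub> l)"
            using X sG by (auto simp: fib_def gh.hom_mult)
        qed
      qed simp
      also have "\<dots> \<le> (1 / real (card S)) * (real K * (\<Sum>t\<in>T. F (inv\<^bsub>H\<^esub> t \<otimes>\<^bsub>H\<^esub> l)))"
      proof (rule mult_left_mono)
        have "(\<Sum>s\<in>S. F (inv\<^bsub>H\<^esub> (\<pi> s) \<otimes>\<^bsub>H\<^esub> l))
          = (\<Sum>t\<in>T. \<Sum>s\<in>{s\<in>S. \<pi> s = t}. F (inv\<^bsub>H\<^esub> (\<pi> s) \<otimes>\<^bsub>H\<^esub> l))"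
          unfolding T_def by (rule sum.image_gen[OF S(2)])
        also have "\<dots> = (\<Sum>t\<in>T. real (card {s\<in>S. \<pi> s = t}) * F (inv\<^bsub>H\<^esub> t \<otimes>\<^bsub>H\<^esub> l))"
          by (rule sum.cong) auto
        also have "\<dots> \<le> (\<Sum>t\<in>T. real K * F (inv\<^bsub>H\<^esub> t \<otimes>\<^bsub>H\<^esub> l))"
          by (rule sum_mono, rule mult_right_mono) (use K Fnn in \<open>auto simp: T_def\<close>)
        also have "\<dots> = real K * (\<Sum>t\<in>T. F (inv\<^bsub>H\<^esub> t \<otimes>\<^bsub>H\<^esub> l))"
          by (simp add: sum_distrib_left)
        finally show "(\<Sum>s\<in>S. F (inv\<^bsub>H\<^esub> (\<pi> s) \<otimes>\<^bsub>H\<^esub> l)) \<le> real K * (\<Sum>t\<in>T. F (inv\<^bsub>H\<^esub> t \<otimes>\<^bsub>H\<^esub> l))" .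
      qed simp
      also have "\<dots> \<le> (1 / real (card T)) * (real K * (\<Sum>t\<in>T. F (inv\<^bsub>H\<^esub> t \<otimes>\<^bsub>H\<^esub> l)))"
        by (rule mult_right_mono) (use cT T(4) in \<open>auto simp: Fnn sum_nonneg frac_le\<close>)
      also have "\<dots> = real K * MTF l" by (simp add: MTF_def)
      finally show ?thesis .
    qed
    let ?g = "\<lambda>x. (cmod (markov_op G S f x))^2"
    have Xb: "sum ?g X \<le> (real K * rho H T)^2" if X: "finite X" "X \<subseteq> carrier G" for X
    proof -
      have "sum ?g X = (\<Sum>l\<in>\<pi> ` X. sum ?g {x\<in>X. \<pi> x = l})"
        by (rule sum.image_gen[OF X(1)])
      also have "\<dots> = (\<Sum>l\<in>\<pi> ` X. (L2_set (\<lambda>x. cmod (markov_op G S f x)) {x\<in>X. \<pi> x = l})^2)"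
        unfolding L2_set_def by (simp add: sum_nonneg)
      also have "\<dots> \<le> (\<Sum>l\<in>\<pi> ` X. (real K * MTF l)^2)"
        by (rule sum_mono, rule power_mono[OF fiber[OF X]]) simp
      also have "\<dots> = (real K)^2 * (\<Sum>l\<in>\<pi> ` X. (cmod (markov_op H T Fc l))^2)"
        by (simp add: MTF power_mult_distrib sum_distrib_left)
      also have "\<dots> \<le> (real K)^2 * infsum (\<lambda>l. (cmod (markov_op H T Fc l))^2) (carrier H)"
        by (rule mult_left_mono, rule finite_sum_le_infsum)
           (use MTl2 X hom in \<open>auto simp: l2space_def hom_in_carrier\<close>)
      also have "\<dots> = (real K)^2 * (l2norm (carrier H) (markov_op H T Fc))^2"
        by (simp add: l2norm_sq)
      also have "\<dots> \<le> (real K)^2 * (rho H T)^2"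
        by (rule mult_left_mono, rule power_mono[OF MTb]) (auto simp: l2norm_nonneg)
      finally show ?thesis by (simp add: power_mult_distrib)
    qed
    have "infsum ?g (carrier G) \<le> (real K * rho H T)^2"
      using bridge[of "carrier G" ?g, OF _ Xb] by auto
    then have "l2norm (carrier G) (markov_op G S f) \<le> sqrt ((real K * rho H T)^2)"
      unfolding l2norm_def by (rule real_sqrt_le_mono)
    then show "l2norm (carrier G) (markov_op G S f) \<le> real K * rho H T"
      using rhoT by simp
  qed
qed

lemma arith_key:
  fixes a b m n k :: real
  assumes "m > 0" "k \<ge> 0" "a \<ge> - m / 2" "b \<le> 0" "b \<le> k + a" "m \<le> n" "n \<le> k + m"
  shows "b / n \<le> a / m + 2 * k / m"
proof (cases "k + a \<ge> 0")
  case True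
  have "b / n \<le> 0" using assms by (simp add: divide_nonpos_pos)
  also have "0 \<le> (a + k) / m" using True assms by simp
  also have "\<dots> \<le> a / m + 2 * k / m" using assms by (simp add: divide_simps)
  finally show ?thesis .
next
  case False
  have n0: "n > 0" using assms by simp
  have "b / n \<le> (k + a) / n" using assms n0 by (simp add: divide_right_mono)
  also have "\<dots> \<le> (k + a) / (k + m)"
    using False n0 assms by (intro divide_left_mono_neg) (auto simp: mult_pos_pos)
  also have "\<dots> \<le> a / m + 2 * k / m"
  proof -
    have "m * (k + a) \<le> a * (k + m) + 2 * k * (k + m)"
    proof -
      have "0 \<le> k * (a + m + 2 * k)" using assms by (intro mult_nonneg_nonneg) auto
      then show ?thesis by (simp add: algebra_simps)
    qed
    then show ?thesis using assms
      by (simp add: divide_simps) (simp add: algebra_simps)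
  qed
  finally show ?thesis .
qed

lemma lift:
  assumes G: "group G" and H: "group H" and epi: "\<pi> \<in> epi G H"
    and S0: "S0 \<in> fin_sym G" and T: "T \<in> fin_sym H" and sub: "\<pi> ` S0 \<subseteq> T"
  shows "\<exists>S. S \<in> fin_sym G \<and> S0 \<subseteq> S \<and> \<pi> ` S = T \<and>
           (\<forall>t\<in>T. card {s\<in>S. \<pi> s = t} \<le> card S0 + 2)"
proof -
  have hom: "\<pi> \<in> hom G H" and surj: "\<pi> ` carrier G = carrier H" using epi by (auto simp: epi_def)
  interpret gh: group_hom G H \<pi> using G H hom by (simp add: group_hom_def group_hom_axioms_def)
  define lf where "lf = (\<lambda>t. SOME x. x \<in> carrier G \<and> \<pi> x = t)"
  have lf: "lf t \<in> carrier G \<and> \<pi> (lf t) = t" if "t \<in> carrier H" for t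
  proof -
    have "t \<in> \<pi> ` carrier G" using that surj by simp
    then obtain x where "x \<in> carrier G" "\<pi> x = t" by blast
    then show ?thesis unfolding lf_def by (metis (mono_tags, lifting) someI_ex)
  qed
  have TH: "T \<subseteq> carrier H" "finite T" "\<And>t. t \<in> T \<Longrightarrow> inv\<^bsub>H\<^esub> t \<in> T"
    using T by (auto simp: fin_sym_def)
  have S0G: "S0 \<subseteq> carrier G" "finite S0" "\<And>s. s \<in> S0 \<Longrightarrow> inv\<^bsub>G\<^esub> s \<in> S0"
    using S0 by (auto simp: fin_sym_def)
  define L where "L = lf ` (T - \<pi> ` S0)"
  define S where "S = S0 \<union> L \<union> (\<lambda>x. inv\<^bsub>G\<^esub> x) ` L"
  have LG: "L \<subseteq> carrier G" using lf TH by (auto simp: L_def)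
  have Ssym: "S \<in> fin_sym G"
    unfolding fin_sym_def S_def
    using LG S0G TH by (auto simp: L_def)
  have img: "\<pi> ` S = T"
  proof
    show "\<pi> ` S \<subseteq> T"
      using sub lf TH LG by (auto simp: S_def L_def)
    show "T \<subseteq> \<pi> ` S"
    proof
      fix t assume t: "t \<in> T"
      show "t \<in> \<pi> ` S"
      proof (cases "t \<in> \<pi> ` S0")
        case True then show ?thesis by (auto simp: S_def)
      next
        case False
        then have "lf t \<in> S" by (auto simp: S_def L_def t)
        moreover have "\<pi> (lf t) = t" using lf t TH by auto
        ultimately show ?thesis by force
      qed
    qed
  qed
  have fib: "card {s\<in>S. \<pi> s = t} \<le> card S0 + 2" if t: "t \<in> T" for t
  proof -
    have "{s\<in>S. \<pi> s = t} \<subseteq> S0 \<union> {lf t, inv\<^bsub>G\<^esub> (lf (inv\<^bsub>H\<^esub> t))}"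
    proof
      fix s assume s: "s \<in> {s\<in>S. \<pi> s = t}"
      show "s \<in> S0 \<union> {lf t, inv\<^bsub>G\<^esub> (lf (inv\<^bsub>H\<^esub> t))}"
      proof (cases "s \<in> S0")
        case True then show ?thesis by simp
      next
        case False
        with s have "s \<in> L \<or> s \<in> (\<lambda>x. inv\<^bsub>G\<^esub> x) ` L" by (auto simp: S_def)
        then show ?thesis
        proof
          assume "s \<in> L"
          then obtain u where u: "u \<in> T" "s = lf u" by (auto simp: L_def)
          then have "\<pi> s = u" using lf TH by auto
          then show ?thesis using s u by auto
        next
          assume "s \<in> (\<lambda>x. inv\<^bsub>G\<^esub> x) ` L"
          then obtain u where u: "u \<in> T" "s = inv\<^bsub>G\<^esub> (lf u)" by (auto simp: L_def)
          have uH: "u \<in> carrier H" using u TH by auto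
          then have "\<pi> s = inv\<^bsub>H\<^esub> u" using lf u by auto
          then have "t = inv\<^bsub>H\<^esub> u" using s by auto
          then have "u = inv\<^bsub>H\<^esub> t" using uH by (simp add: group.inv_inv[OF H])
          then show ?thesis using u by auto
        qed
      qed
    qed
    then have "card {s\<in>S. \<pi> s = t} \<le> card (S0 \<union> {lf t, inv\<^bsub>G\<^esub> (lf (inv\<^bsub>H\<^esub> t))})"
      by (rule card_mono[rotated]) (use S0G in auto)
    also have "\<dots> \<le> card S0 + card {lf t, inv\<^bsub>G\<^esub> (lf (inv\<^bsub>H\<^esub> t))}" by (rule card_Un_le)
    also have "card {lf t, inv\<^bsub>G\<^esub> (lf (inv\<^bsub>H\<^esub> t))} \<le> 2" by (simp add: card_insert_le_m1)
    finally show ?thesis by simp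
  qed
  show ?thesis using Ssym img fib by (intro exI[of _ S]) (auto simp: S_def)
qed

theorem lemma7p4:
  fixes G :: "('a, 'c) monoid_scheme" and H :: "('b, 'd) monoid_scheme"
    and \<pi> :: "'a \<Rightarrow> 'b"
  assumes "group G" and "group H" and "\<pi> \<in> epi G H"
  shows "r_exp G \<ge> r_exp H"
proof -
  note G = assms(1) and H = assms(2) and epi = assms(3)
  have hom: "\<pi> \<in> hom G H" using epi by (auto simp: epi_def)
  interpret gh: group_hom G H \<pi> using G H hom by (simp add: group_hom_def group_hom_axioms_def)
  define fG where "fG = (\<lambda>S. ln (rho G S) / ln (real (card S)))"
  define fH where "fH = (\<lambda>S. ln (rho H S) / ln (real (card S)))"
  have rG: "r_exp G = - (SUP S\<in>fin_sym G. INF S'\<in>{S'\<in>fin_sym G. S \<subseteq> S'}. ereal (fG S'))"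
    by (simp add: r_exp_def fG_def)
  have rH: "r_exp H = - (SUP S\<in>fin_sym H. INF S'\<in>{S'\<in>fin_sym H. S \<subseteq> S'}. ereal (fH S'))"
    by (simp add: r_exp_def fH_def)
  let ?SH = "SUP S\<in>fin_sym H. INF S'\<in>{S'\<in>fin_sym H. S \<subseteq> S'}. ereal (fH S')"
  have main: "(SUP S\<in>fin_sym G. INF S'\<in>{S'\<in>fin_sym G. S \<subseteq> S'}. ereal (fG S')) \<le> ?SH"
  proof (rule SUP_least)
    fix S0 assume S0: "S0 \<in> fin_sym G"
    have S0G: "S0 \<subseteq> carrier G" "finite S0" "\<And>s. s \<in> S0 \<Longrightarrow> inv\<^bsub>G\<^esub> s \<in> S0"
      using S0 by (auto simp: fin_sym_def)
    let ?IG = "INF S'\<in>{S'\<in>fin_sym G. S0 \<subseteq> S'}. ereal (fG S')"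
    show "?IG \<le> ?SH"
    proof (cases "finite (carrier H)")
      case True
      define S1 where "S1 = insert \<one>\<^bsub>G\<^esub> S0"
      have S1: "S1 \<in> fin_sym G" "S0 \<subseteq> S1"
        using S0G G by (auto simp: S1_def fin_sym_def)
      have S1G: "S1 \<subseteq> carrier G" "finite S1" "S1 \<noteq> {}" using S1 by (auto simp: fin_sym_def S1_def)
      have "?IG \<le> ereal (fG S1)" by (rule INF_lower) (use S1 in auto)
      also have "fG S1 \<le> 0"
      proof -
        have c1: "real (card S1) \<ge> 1" using S1G by (simp add: Suc_leI card_gt_0_iff)
        have "rho G S1 \<ge> 1 / sqrt (real (card S1))" by (rule rho_lower[OF G S1G])
        moreover have "1 / sqrt (real (card S1)) > 0" using c1 by simp
        ultimately have p: "rho G S1 > 0" by linarith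
        have "rho G S1 \<le> 1" by (rule rho_le1[OF G S1G(1,2)])
        then have "ln (rho G S1) \<le> 0" using p by simp
        moreover have "ln (real (card S1)) \<ge> 0" using c1 by simp
        ultimately show ?thesis unfolding fG_def by (simp add: divide_nonpos_nonneg)
      qed
      then have "ereal (fG S1) \<le> 0" by simp
      also have "0 \<le> (INF T'\<in>{T'\<in>fin_sym H. carrier H \<subseteq> T'}. ereal (fH T'))"
      proof (rule INF_greatest)
        fix T' assume "T' \<in> {T'\<in>fin_sym H. carrier H \<subseteq> T'}"
        then have "T' = carrier H" by (auto simp: fin_sym_def)
        then show "0 \<le> ereal (fH T')" using rho_full[OF H True] by (simp add: fH_def)
      qed
      also have "\<dots> \<le> ?SH" by (rule SUP_upper) (use True H in \<open>auto simp: fin_sym_def\<close>)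
      finally show ?thesis .
    next
      case False
      show ?thesis
      proof (rule ccontr)
        assume "\<not> ?IG \<le> ?SH"
        then have lt: "?SH < ?IG" by simp
        obtain q1 where q1: "?SH < ereal q1" "ereal q1 < ?IG" using ereal_dense2[OF lt] by blast
        obtain q2 where q2: "ereal q1 < ereal q2" "ereal q2 < ?IG" using ereal_dense2[OF q1(2)] by blast
        have q12: "q1 < q2" using q2 by simp
        define K :: nat where "K = card S0 + 2"
        define k where "k = ln (real K)"
        have k0: "k > 0" by (simp add: k_def K_def)
        define d where "d = q2 - q1"
        have d0: "d > 0" using q12 by (simp add: d_def)
        define N :: nat where "N = nat \<lceil>exp (2 * k / d)\<rceil> + 2"
        have N2: "N \<ge> 2" by (simp add: N_def)
        have "exp (2 * k / d) \<le> real (nat \<lceil>exp (2 * k / d)\<rceil>)"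
          by (rule real_nat_ceiling_ge)
        moreover have "real N = real (nat \<lceil>exp (2 * k / d)\<rceil>) + 2" unfolding N_def by simp
        ultimately have "exp (2 * k / d) < real N" by linarith
        then have lnN: "2 * k / d < ln (real N)"
        proof -
          have "ln (exp (2 * k / d)) < ln (real N)"
            using \<open>exp (2 * k / d) < real N\<close> N2 by (subst ln_less_cancel_iff) auto
          then show ?thesis by simp
        qed
        obtain A where A: "A \<subseteq> carrier H" "finite A" "card A = N"
          using infinite_arbitrarily_large[OF False] by blast
        define T0 where "T0 = \<pi> ` S0 \<union> A \<union> (\<lambda>x. inv\<^bsub>H\<^esub> x) ` A"
        have T0: "T0 \<in> fin_sym H"
        proof -
          have "\<pi> ` S0 \<subseteq> carrier H" using S0G hom by (auto simp: hom_in_carrier)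
          moreover have "inv\<^bsub>H\<^esub> (\<pi> s) \<in> \<pi> ` S0" if "s \<in> S0" for s
            using that S0G by (metis gh.hom_inv image_eqI subsetD)
          ultimately have a1: "\<pi> ` S0 \<subseteq> carrier H" and a2: "\<And>s. s \<in> S0 \<Longrightarrow> inv\<^bsub>H\<^esub> (\<pi> s) \<in> \<pi> ` S0"
            by blast+
          have c1: "T0 \<subseteq> carrier H"
            unfolding T0_def using a1 A(1) group.inv_closed[OF H] by blast
          have c2: "finite T0" unfolding T0_def using A(2) S0G(2) by simp
          have c3: "inv\<^bsub>H\<^esub> x \<in> T0" if x: "x \<in> T0" for x
          proof -
            consider (a) "x \<in> \<pi> ` S0" | (b) "x \<in> A" | (c) "x \<in> (\<lambda>x. inv\<^bsub>H\<^esub> x) ` A"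
              using x unfolding T0_def by blast
            then show ?thesis
            proof cases
              case a
              then obtain s where "s \<in> S0" "x = \<pi> s" by blast
              then show ?thesis using a2 unfolding T0_def by blast
            next
              case b
              then show ?thesis unfolding T0_def by blast
            next
              case c
              then obtain y where y: "y \<in> A" "x = inv\<^bsub>H\<^esub> y" by blast
              then have "inv\<^bsub>H\<^esub> x = y" using A(1) group.inv_inv[OF H] by blast
              then show ?thesis using y unfolding T0_def by blast
            qed
          qed
          show ?thesis unfolding fin_sym_def using c1 c2 c3 by blast
        qed
        have "(INF T'\<in>{T'\<in>fin_sym H. T0 \<subseteq> T'}. ereal (fH T')) \<le> ?SH"
          by (rule SUP_upper[OF T0])
        then have "(INF T'\<in>{T'\<in>fin_sym H. T0 \<subseteq> T'}. ereal (fH T')) < ereal q1"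
          using q1(1) by (rule le_less_trans)
        then obtain T' where T'0: "T' \<in> {T'\<in>fin_sym H. T0 \<subseteq> T'}" "ereal (fH T') < ereal q1"
          unfolding INF_less_iff by blast
        then have T': "T' \<in> fin_sym H" "T0 \<subseteq> T'" "fH T' < q1" by auto
        have T'H: "T' \<subseteq> carrier H" "finite T'" using T' by (auto simp: fin_sym_def)
        have cT': "card T' \<ge> N"
        proof -
          have "card A \<le> card T'" by (rule card_mono[OF T'H(2)]) (use T' in \<open>auto simp: T0_def\<close>)
          then show ?thesis using A by simp
        qed
        have sub: "\<pi> ` S0 \<subseteq> T'" using T' by (auto simp: T0_def)
        from lift[OF G H epi S0 T'(1) sub] obtain S' where S': "S' \<in> fin_sym G" "S0 \<subseteq> S'" "\<pi> ` S' = T'"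
          "\<forall>t\<in>T'. card {s\<in>S'. \<pi> s = t} \<le> card S0 + 2"
          by blast
        have S'4: "card {s\<in>S'. \<pi> s = t} \<le> K" if "t \<in> T'" for t
          using S'(4) that unfolding K_def by blast
        have S'G: "S' \<subseteq> carrier G" "finite S'" using S' by (auto simp: fin_sym_def)
        have "?IG \<le> ereal (fG S')" by (rule INF_lower) (use S' in auto)
        with q2(2) have "ereal q2 < ereal (fG S')" by (rule less_le_trans)
        then have q2f: "q2 < fG S'" by simp
        have T'ne: "T' \<noteq> {}" using cT' N2 by auto
        then have S'ne: "S' \<noteq> {}" using S' by auto
        have cTS: "card T' \<le> card S'" using S'(3) card_image_le[OF S'G(2), of \<pi>] by simp
        have cSK: "card S' \<le> K * card T'"
        proof -
          have "card S' = (\<Sum>t\<in>\<pi> ` S'. card {s\<in>S'. \<pi> s = t})"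
            using sum.image_gen[OF S'G(2), of "\<lambda>_. 1::nat" \<pi>] by simp
          also have "\<dots> = (\<Sum>t\<in>T'. card {s\<in>S'. \<pi> s = t})" using S'(3) by simp
          also have "\<dots> \<le> (\<Sum>t\<in>T'. K)" by (rule sum_mono) (use S'4 in auto)
          finally show ?thesis by (simp add: mult.commute)
        qed
        have rG1: "rho G S' \<le> 1" by (rule rho_le1[OF G S'G])
        have rGp: "rho G S' > 0"
        proof -
          have "rho G S' \<ge> 1 / sqrt (real (card S'))" by (rule rho_lower[OF G S'G S'ne])
          moreover have "1 / sqrt (real (card S')) > 0" using S'ne S'G by (simp add: card_gt_0_iff)
          ultimately show ?thesis by linarith
        qed
        have rHl: "rho H T' \<ge> 1 / sqrt (real (card T'))" by (rule rho_lower[OF H T'H T'ne])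
        have rHp: "rho H T' > 0"
        proof -
          have "1 / sqrt (real (card T')) > 0" using T'ne T'H by (simp add: card_gt_0_iff)
          then show ?thesis using rHl by linarith
        qed
        have kes: "rho G S' \<le> real K * rho H T'"
          using kesten[OF G H hom S'G S'ne, of K] S'(3) S'4 by auto
        define m where "m = ln (real (card T'))"
        define n where "n = ln (real (card S'))"
        have cT'r: "real (card T') \<ge> 2" using cT' N2 by linarith
        have m0: "m > 0" using cT'r by (simp add: m_def)
        have mN: "m \<ge> ln (real N)" using cT' N2 by (simp add: m_def)
        have a_ge: "ln (rho H T') \<ge> - m / 2"
        proof -
          have "ln (1 / sqrt (real (card T'))) \<le> ln (rho H T')"
            using rHl rHp cT'r by (subst ln_le_cancel_iff) auto
          moreover have "ln (1 / sqrt (real (card T'))) = - m / 2"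
            using cT'r by (simp add: m_def ln_div ln_sqrt)
          ultimately show ?thesis by simp
        qed
        have b_le0: "ln (rho G S') \<le> 0" using rG1 rGp by simp
        have b_le: "ln (rho G S') \<le> k + ln (rho H T')"
        proof -
          have "ln (rho G S') \<le> ln (real K * rho H T')"
            using kes rGp by (subst ln_le_cancel_iff) auto
          also have "\<dots> = k + ln (rho H T')" using rHp by (simp add: ln_mult k_def K_def)
          finally show ?thesis .
        qed
        have mn: "m \<le> n" using cTS cT'r by (simp add: m_def n_def)
        have nk: "n \<le> k + m"
        proof -
          have r1: "real (card S') \<le> real K * real (card T')"
            using cSK by (metis of_nat_le_iff of_nat_mult)
          have r2: "real (card S') > 0" using S'ne S'G by (simp add: card_gt_0_iff)
          have "n \<le> ln (real K * real (card T'))"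
            unfolding n_def using r1 r2 by (subst ln_le_cancel_iff) auto
          also have "\<dots> = k + m" using cT'r by (simp add: ln_mult k_def K_def m_def)
          finally show ?thesis .
        qed
        have key: "fG S' \<le> fH T' + 2 * k / m"
          using arith_key[OF m0 _ a_ge b_le0 b_le mn nk] k0
          by (simp add: fG_def fH_def m_def n_def)
        have "2 * k / m \<le> 2 * k / ln (real N)"
        proof (rule divide_left_mono)
          show "ln (real N) \<le> m" by (rule mN)
          show "0 \<le> 2 * k" using k0 by simp
          have "ln (real N) > 0" using N2 by simp
          then show "0 < m * ln (real N)" using m0 by simp
        qed
        also have "\<dots> < d"
        proof -
          have lN0: "ln (real N) > 0" using N2 by simp
          have "2 * k < d * ln (real N)" using lnN d0 by (simp add: pos_divide_less_eq mult.commute)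
          then show ?thesis using lN0 by (simp add: pos_divide_less_eq)
        qed
        finally have "fG S' < q1 + d" using key T'(3) by linarith
        then show False using q2f by (simp add: d_def)
      qed
    qed
  qed
  show ?thesis unfolding rG rH using main by simp
qed

end
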